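(* Let $\Lambda$ be an even unimodular lattice, $a\in\mathfrak h=\Lambda\otimes\mathbb Q_p$ with $\langle a,a\rangle=1$, and $r,t$ odd integers with $t\ge1$, $r\ge3$. Then in $V_\Lambda$, setting $v_{r,t}=(r-1)!\,a[-r]a[-1]^t\mathbf 1$, $$v_{r,t}=\sum_{n\ge0}\sum_{k\ge0}\binom t{2k}\frac{n!\,S_r^{(n+1)}(2k)!}{k!(-24)^k}a(-n-1)a(-1)^{t-2k}\mathbf 1-\sum_{k\ge0}\binom t{2k+1}\frac{B_{r+1}(2k+1)!}{k!(r+1)(-24)^k}a(-1)^{t-2k-1}\mathbf 1,$$ where $S_r^{(n+1)}=\frac1{n!}\sum_{j\ge0}\binom nj(-1)^{n+j}(j+1)^{r-1}$.
   Context: $V_\Lambda=S_{\mathrm{alg}}\otimes\mathbb Q_p\{\Lambda\}$ is the lattice VOA of $\Lambda$, where $S_{\mathrm{alg}}$ is the Heisenberg VOA on $\mathfrak h$ (polynomials in $b(-n)$, $b\in\mathfrak h$, $n\ge1$, with $[b(m),c(n)]=m\langle b,c\rangle\delta_{m+n,0}$), identified with $S_{\mathrm{alg}}\otimes e^0$; $b(n)$ for $n\neq0$ acts on the first tensor factor and $b(0)$ acts on $s\otimes e^\alpha$ by $\langle b,\alpha\rangle$. Square-bracket modes: $b[n]=\mathrm{Res}_w\,b(w)(\log(1+w))^n$ with $b(w)=\sum_m b(m)w^{-m-1}$; products mean successive application to $\mathbf 1$. $B_m$ are the Bernoulli numbers. *)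

theory Defs
  imports "HOL-Analysis.Analysis" "HOL-Library.Poly_Mapping" "HOL-Library.Function_Algebras"
    "HOL-Computational_Algebra.Formal_Laurent_Series"
begin

text \<open>The lattice Lambda has Z-basis indexed by the finite type 'n with Gram matrix G.
  h = Lambda (x) k has coordinates 'n => k (k a field of characteristic 0, standing in for Q_p).
  V_Lambda = S_alg (x) k{Lambda} has the basis vectors (alpha, mu), alpha in Lambda = ('n => int),
  mu a monomial in the variables x_(i,m) = e_i(-(m+1)) (i in 'n, m >= 0); the basis vector
  (alpha, mu) is mu (x) e^alpha.\<close>

type_synonym 'n vbasis = "('n \<Rightarrow> int) \<times> (('n \<times> nat) \<Rightarrow>\<^sub>0 nat)"
type_synonym ('n, 'k) vvec = "'n vbasis \<Rightarrow> 'k"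

definition latform :: "int^'n^'n \<Rightarrow> ('n::finite \<Rightarrow> 'k::field_char_0) \<Rightarrow> ('n \<Rightarrow> 'k) \<Rightarrow> 'k" where
  "latform G b c = (\<Sum>i\<in>UNIV. \<Sum>j\<in>UNIV. b i * of_int (G$i$j) * c j)"

definition even_unimodular_lattice :: "int^'n^'n \<Rightarrow> bool" where
  "even_unimodular_lattice G \<longleftrightarrow>
     transpose G = G \<and> (\<forall>i. even (G$i$i)) \<and> \<bar>det G\<bar> = 1 \<and>
     (\<forall>x::'n::finite \<Rightarrow> int. x \<noteq> 0 \<longrightarrow> 0 < (\<Sum>i\<in>UNIV. \<Sum>j\<in>UNIV. x i * G$i$j * x j))"

definition scal :: "'k::field \<Rightarrow> ('b \<Rightarrow> 'k) \<Rightarrow> ('b \<Rightarrow> 'k)" where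
  "scal c v = (\<lambda>x. c * v x)"

definition mulvar :: "'n \<times> nat \<Rightarrow> ('n, 'k::field) vvec \<Rightarrow> ('n, 'k) vvec" where
  "mulvar im v = (\<lambda>(\<alpha>, \<mu>). if 0 < Poly_Mapping.lookup \<mu> im then v (\<alpha>, \<mu> - Poly_Mapping.single im 1) else 0)"

definition dervar :: "'n \<times> nat \<Rightarrow> ('n, 'k::field) vvec \<Rightarrow> ('n, 'k) vvec" where
  "dervar im v = (\<lambda>(\<alpha>, \<mu>). of_nat (Poly_Mapping.lookup \<mu> im + 1) * v (\<alpha>, \<mu> + Poly_Mapping.single im 1))"

definition hmode :: "int^'n^'n \<Rightarrow> ('n::finite \<Rightarrow> 'k::field_char_0) \<Rightarrow> int \<Rightarrow> ('n, 'k) vvec \<Rightarrow> ('n, 'k) vvec" where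
  "hmode G b m v =
     (if m < 0 then (\<lambda>x. \<Sum>i\<in>UNIV. b i * mulvar (i, nat (- m) - 1) v x)
      else if m = 0 then (\<lambda>(\<alpha>, \<mu>). latform G b (\<lambda>j. of_int (\<alpha> j)) * v (\<alpha>, \<mu>))
      else (\<lambda>x. of_int m * (\<Sum>j\<in>UNIV. latform G b (\<lambda>l. if l = j then 1 else 0) * dervar (j, nat m - 1) v x)))"

definition vac :: "('n, 'k::field) vvec" where
  "vac = (\<lambda>x. if x = (0, 0) then 1 else 0)"

definition fin_sum :: "('i \<Rightarrow> 'a::comm_monoid_add) \<Rightarrow> 'a" where
  "fin_sum f = sum f {i. f i \<noteq> 0}"

definition logser :: "'k::field_char_0 fls" where
  "logser = fps_to_fls (fps_ln 1)"

text \<open>Square-bracket modes b[n] = Res_w b(w) (log(1+w))^n = sum_m (coeff of w^m in log(1+w)^n) b(m).\<close>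
definition sqmode :: "int^'n^'n \<Rightarrow> ('n::finite \<Rightarrow> 'k::field_char_0) \<Rightarrow> int \<Rightarrow> ('n, 'k) vvec \<Rightarrow> ('n, 'k) vvec" where
  "sqmode G b n v = fin_sum (\<lambda>m::int. scal (fls_nth (logser powi n) m) (hmode G b m v))"

definition bernoulli_num :: "nat \<Rightarrow> 'k::field_char_0" where
  "bernoulli_num n = fact n * ((fps_X / (fps_exp 1 - 1)) $ n)"

definition stirlS :: "nat \<Rightarrow> nat \<Rightarrow> 'k::field_char_0" where
  "stirlS r n = (1 / fact n) * (\<Sum>j\<le>n. of_nat (n choose j) * (-1) ^ (n + j) * of_nat (j + 1) ^ (r - 1))"

end

theory Submission
  imports Defs
begin


lemma res_powi_deriv:
  fixes H :: "'k::field_char_0 fps"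
  assumes H0: "H $ 0 = 0" and H1: "H $ 1 \<noteq> 0"
  shows "fls_residue (fps_to_fls H powi d * fls_deriv (fps_to_fls H)) = (if d = -1 then 1 else 0)"
proof -
  define h where "h = fps_to_fls H"
  have Hnz: "H \<noteq> 0" using H1 by auto
  have sdH: "subdegree H = 1" using H0 H1 by (intro subdegreeI) (auto simp: less_Suc_eq)
  have hnz: "h \<noteq> 0" using Hnz by (simp add: h_def)
  have sdh: "fls_subdegree h = 1" by (simp add: h_def fls_subdegree_fls_to_fps sdH)
  show ?thesis
  proof (cases "d \<ge> 0")
    case True
    have "h powi d * fls_deriv h = fps_to_fls (H ^ nat d * fps_deriv H)"
      using True by (simp add: h_def fls_deriv_fps_to_fls fls_times_fps_to_fls fps_to_fls_power power_int_def)
    then show ?thesis using True by (simp add: h_def)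
  next
    case False
    show ?thesis
    proof (cases "d = -1")
      case True
      have "h powi d * fls_deriv h = fls_deriv h * inverse h" using True by (simp add: power_int_minus)
      then show ?thesis using True fls_residue_deriv_times_inverse_eq_subdegree(1)[of h] sdh by (simp add: h_def mult.commute)
    next
      case False2: False
      define k where "k = nat (- d - 1)"
      have k1: "k \<ge> 1" and dk: "d = - int k - 1" using False False2 by (auto simp: k_def)
      have e1: "h powi d = inverse (h ^ Suc k)" using dk
        by (metis add.commute diff_minus_eq_add minus_diff_eq of_nat_Suc power_int_minus power_int_of_nat uminus_add_conv_diff)
      have e2: "h powi (d+1) = inverse (h ^ k)" using dk by (simp add: power_int_minus)
      have "fls_deriv (h powi (d+1)) = - (of_nat k * h ^ (k - 1) * fls_deriv h) * (inverse (h ^ k))\<^sup>2"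
        by (simp add: e2 fls_inverse_deriv fls_deriv_power)
      also have "\<dots> = - of_nat k * (inverse (h ^ Suc k) * fls_deriv h)"
      proof -
        have "h ^ (k-1) * (inverse (h^k))^2 = inverse (h ^ Suc k)"
          using k1 hnz by (cases k) (auto simp: field_simps power2_eq_square)
        then show ?thesis by (metis (no_types, lifting) mult.assoc mult.commute mult_minus_left)
      qed
      finally have eq: "h powi d * fls_deriv h = fls_deriv (fls_const (- 1 / of_nat k) * h powi (d+1))"
        using k1 by (simp add: fls_deriv_mult_const_left e1 field_simps fls_of_nat)
      have "fls_residue (h powi d * fls_deriv h) = 0"
        unfolding eq by (rule fls_residue_deriv)
      then show ?thesis using False2 by (simp add: h_def)
    qed
  qed
qed

lemma compose_fls_X:
  fixes H :: "'k::field_char_0 fps"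
  assumes "H $ 0 = 0" "H \<noteq> 0"
  shows "fls_compose_fps fls_X H = fps_to_fls H"
proof -
  have "fls_compose_fps (fps_to_fls fps_X) H = fps_to_fls (fps_X oo H)"
    using assms by (intro fls_compose_fps_to_fls) auto
  then show ?thesis using assms by (simp add: fps_X_to_fls)
qed

lemma compose_fls_const:
  fixes H :: "'k::field_char_0 fps"
  assumes "H $ 0 = 0" "H \<noteq> 0"
  shows "fls_compose_fps (fls_const c) H = fls_const c"
proof -
  have "fls_compose_fps (fps_to_fls (fps_const c)) H = fps_to_fls (fps_const c oo H)"
    using assms by (intro fls_compose_fps_to_fls) auto
  then show ?thesis by (simp add: fps_const_compose)
qed

lemma compose_fls_X_intpow:
  fixes H :: "'k::field_char_0 fps"
  assumes "H $ 0 = 0" "H \<noteq> 0"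
  shows "fls_compose_fps (fls_X_intpow j) H = fps_to_fls H powi j"
proof -
  have "fls_compose_fps (fls_X powi j) H = fls_compose_fps fls_X H powi j"
    using assms by (intro fls_compose_fps_powi) auto
  then show ?thesis using compose_fls_X[OF assms] by simp
qed

lemma res_change_var:
  fixes H :: "'k::field_char_0 fps" and F :: "'k fls"
  assumes H0: "H $ 0 = 0" and H1: "H $ 1 \<noteq> 0"
  shows "fls_residue (fls_compose_fps F H * fls_deriv (fps_to_fls H)) = fls_residue F"
proof -
  have Hnz: "H \<noteq> 0" using H1 by auto
  have main: "\<And>F::'k fls. F = 0 \<or> - int k \<le> fls_subdegree F \<Longrightarrow>
     fls_residue (fls_compose_fps F H * fls_deriv (fps_to_fls H)) = fls_residue F" for k
  proof (induction k)
    case 0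
    then show ?case
    proof
      assume "F = 0" then show ?thesis by simp
    next
      assume sd: "- int 0 \<le> fls_subdegree F"
      then have "F = fps_to_fls (fls_regpart F)" by simp
      then have "fls_compose_fps F H = fps_to_fls (fls_regpart F oo H)"
        using H0 Hnz by (metis fls_compose_fps_to_fls)
      then have "fls_compose_fps F H * fls_deriv (fps_to_fls H) = fps_to_fls ((fls_regpart F oo H) * fps_deriv H)"
        by (simp add: fls_deriv_fps_to_fls fls_times_fps_to_fls)
      then show ?thesis using sd by simp
    qed
  next
    case (Suc k)
    show ?case
    proof (cases "F = 0 \<or> - int k \<le> fls_subdegree F")
      case True then show ?thesis using Suc.IH by blast
    next
      case False
      then have Fnz: "F \<noteq> 0" and sdF: "fls_subdegree F = - int k - 1" using Suc.prems by auto
      define c where "c = fls_nth F (- int k - 1)"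
      define F' where "F' = F - fls_const c * fls_X_intpow (- int k - 1)"
      have F'nth: "fls_nth F' j = 0" if "j < - int k" for j
      proof (cases "j = - int k - 1")
        case True then show ?thesis by (simp add: F'_def c_def)
      next
        case False
        then have "j < fls_subdegree F" using that sdF by simp
        then show ?thesis using False by (simp add: F'_def)
      qed
      have "F' = 0 \<or> - int k \<le> fls_subdegree F'"
        using F'nth fls_subdegree_geI[of F' "- int k"] by blast
      then have IH: "fls_residue (fls_compose_fps F' H * fls_deriv (fps_to_fls H)) = fls_residue F'"
        by (rule Suc.IH)
      have FF: "F = F' + fls_const c * fls_X_intpow (- int k - 1)" by (simp add: F'_def)
      have cmp: "fls_compose_fps F H = fls_compose_fps F' H + fls_const c * fps_to_fls H powi (- int k - 1)"
        unfolding FF 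
        by (simp only: fls_compose_fps_add[OF Hnz H0] fls_compose_fps_mult[OF Hnz H0]
              compose_fls_const[OF H0 Hnz] compose_fls_X_intpow[OF H0 Hnz])
      have r2: "fls_residue (fls_const c * fps_to_fls H powi (- int k - 1) * fls_deriv (fps_to_fls H))
          = c * (if - int k - 1 = -1 then 1 else 0)"
        unfolding mult.assoc fls_residue_fls_const_times(1) res_powi_deriv[OF H0 H1] ..
      have r3: "fls_residue (fls_const c * fls_X_intpow (- int k - 1)) = c * (if - int k - 1 = -1 then 1 else 0)"
        unfolding fls_residue_fls_const_times(1) fls_residue_fls_X_intpow ..
      show ?thesis
      proof -
        have "fls_residue (fls_compose_fps F H * fls_deriv (fps_to_fls H)) =
          fls_residue (fls_compose_fps F' H * fls_deriv (fps_to_fls H)) + 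
          fls_residue (fls_const c * fps_to_fls H powi (- int k - 1) * fls_deriv (fps_to_fls H))"
          unfolding cmp distrib_right by (rule fls_residue_add)
        also have "\<dots> = fls_residue F' + fls_residue (fls_const c * fls_X_intpow (- int k - 1))"
          using IH r2 r3 by simp
        also have "\<dots> = fls_residue F" by (simp only: FF[symmetric] fls_residue_add[symmetric])
        finally show ?thesis .
      qed
    qed
  qed
  show ?thesis
    by (rule main[of F "nat (- fls_subdegree F)"]) auto
qed



abbreviation EE :: "'k::field_char_0 fps" where "EE \<equiv> fps_exp 1 - 1"

lemma EE0: "EE $ 0 = 0" by simp
lemma EE1: "(EE :: 'k::field_char_0 fps) $ 1 \<noteq> 0" by simp
lemma EEnz: "(EE :: 'k::field_char_0 fps) \<noteq> 0" using EE1 by force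

lemma ln_EE: "(fps_ln 1 :: 'k::field_char_0 fps) oo EE = fps_X"
  using fps_ln_fps_exp_inv[of "1::'k"] fps_inv_fps_exp_compose(1)[of "1::'k"] by simp

lemma logser_compose: "fls_compose_fps (logser :: 'k::field_char_0 fls) EE = fls_X"
proof -
  have "fls_compose_fps (fps_to_fls (fps_ln (1::'k))) EE = fps_to_fls (fps_ln 1 oo EE)"
    using EE0 EEnz by (intro fls_compose_fps_to_fls) auto
  then show ?thesis by (simp add: logser_def ln_EE)
qed

lemma deriv_EE: "fls_deriv (fps_to_fls (EE :: 'k::field_char_0 fps)) = fps_to_fls (fps_exp 1)"
  by (simp add: fls_deriv_fps_to_fls)

lemma coef_formula:
  "fls_nth ((logser :: 'k::field_char_0 fls) powi n) m =
   fls_residue (fps_to_fls EE powi (-m-1) * fls_X_intpow n * fps_to_fls (fps_exp 1))"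
proof -
  have "fls_nth (logser powi n) m = fls_residue (fls_X_intpow (-m-1) * logser powi n)"
    by (rule fls_residue_shift_nth)
  also have "\<dots> = fls_residue (fls_compose_fps (fls_X_intpow (-m-1) * logser powi n) EE * fls_deriv (fps_to_fls EE))"
    by (rule res_change_var[symmetric]) (simp_all)
  also have "fls_compose_fps (fls_X_intpow (-m-1) * logser powi n) EE = fps_to_fls EE powi (-m-1) * fls_X_intpow n"
    using EE0 EEnz
    by (simp only: fls_compose_fps_mult[OF EEnz EE0] compose_fls_X_intpow[OF EE0 EEnz]
          fls_compose_fps_powi[OF EEnz EE0] logser_compose fls_X_power_int)
  finally show ?thesis by (simp only: deriv_EE)
qed

lemma res_shift_fps:
  fixes f :: "'k::field_char_0 fps"
  assumes "r \<ge> 1"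
  shows "fls_residue (fps_to_fls f * fls_X_intpow (- int r)) = f $ (r - 1)"
proof -
  have "fps_to_fls f * fls_X_intpow (- int r) = fls_shift (int r) (fps_to_fls f)"
    using fls_shifted_times_simps(1)[of "fps_to_fls f" "int r" 1] by simp
  then show ?thesis using assms by (simp add: nat_diff_distrib)
qed

lemma EE_pow_exp:
  "(EE ^ j * fps_exp 1 :: 'k::field_char_0 fps) =
    (\<Sum>i\<le>j. fps_const (of_nat (j choose i) * (-1)^(j-i)) * fps_exp (of_nat i + 1))"
proof -
  have "(EE :: 'k fps) ^ j = (fps_exp 1 + (-1)) ^ j" by simp
  also have "\<dots> = (\<Sum>i\<le>j. of_nat (j choose i) * fps_exp 1 ^ i * (-1) ^ (j - i))"
    by (rule binomial_ring)
  finally have "(EE :: 'k fps) ^ j * fps_exp 1 = (\<Sum>i\<le>j. of_nat (j choose i) * fps_exp 1 ^ i * (-1) ^ (j - i) * fps_exp 1)"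
    by (simp add: sum_distrib_right)
  also have "\<dots> = (\<Sum>i\<le>j. fps_const (of_nat (j choose i) * (-1)^(j-i)) * fps_exp (of_nat i + 1))"
  proof (rule sum.cong[OF refl])
    fix i
    have e1: "fps_exp (1::'k) ^ i * fps_exp 1 = fps_exp (of_nat i + 1)"
      by (simp add: fps_exp_power_mult fps_exp_add_mult)
    have e2: "(-1 :: 'k fps) ^ (j - i) = fps_const ((-1) ^ (j - i))"
    proof -
      have "(-1 :: 'k fps) = fps_const (-1)" by simp
      then show ?thesis by (simp only: fps_const_power)
    qed
    have e3: "(of_nat (j choose i) :: 'k fps) = fps_const (of_nat (j choose i))"
      by (simp add: fps_of_nat)
    have "of_nat (j choose i) * fps_exp 1 ^ i * (-1) ^ (j - i) * fps_exp 1 =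
      fps_const (of_nat (j choose i)) * fps_const ((-1)^(j-i)) * (fps_exp 1 ^ i * (fps_exp 1 :: 'k fps))"
      unfolding e2 e3 by (simp only: mult_ac)
    also have "\<dots> = fps_const (of_nat (j choose i) * (-1)^(j-i)) * (fps_exp (of_nat i + 1) :: 'k fps)"
      by (simp only: e1 fps_const_mult)
    finally show "of_nat (j choose i) * fps_exp 1 ^ i * (-1) ^ (j - i) * fps_exp 1 =
      fps_const (of_nat (j choose i) * (-1)^(j-i)) * (fps_exp (of_nat i + 1) :: 'k fps)" .
  qed
  finally show ?thesis .
qed

lemma coef_neg:
  assumes "r \<ge> 1"
  shows "fact (r - 1) * fls_nth ((logser :: 'k::field_char_0 fls) powi (- int r)) (- int j - 1) =
    (\<Sum>i\<le>j. of_nat (j choose i) * (-1)^(j-i) * of_nat (i+1)^(r-1))"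
proof -
  have "fls_nth ((logser :: 'k fls) powi (- int r)) (- int j - 1) =
     fls_residue (fps_to_fls EE powi int j * fls_X_intpow (- int r) * fps_to_fls (fps_exp 1))"
    unfolding coef_formula by simp
  also have "fps_to_fls EE powi int j * fls_X_intpow (- int r) * fps_to_fls (fps_exp 1) =
      fps_to_fls (EE ^ j * fps_exp (1::'k)) * fls_X_intpow (- int r)"
    by (simp add: fps_to_fls_power fls_times_fps_to_fls mult_ac power_int_of_nat)
  also have "fls_residue \<dots> = (EE ^ j * fps_exp (1::'k)) $ (r - 1)"
    using assms by (rule res_shift_fps)
  also have "\<dots> = (\<Sum>i\<le>j. of_nat (j choose i) * (-1)^(j-i) * of_nat (i+1)^(r-1) / fact (r - 1))"
    unfolding EE_pow_exp fps_sum_nth by (simp add: add.commute)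
  finally show ?thesis by (simp add: sum_distrib_left)
qed

lemma sd_EE: "subdegree (EE :: 'k::field_char_0 fps) = 1"
  by (rule subdegreeI) (auto simp: less_Suc_eq)

lemma EE_Bf: "(EE :: 'k::field_char_0 fps) * (fps_X / EE) = fps_X"
proof -
  have "subdegree (EE :: 'k fps) \<le> subdegree (fps_X :: 'k fps)" unfolding sd_EE by simp
  then have "(EE :: 'k fps) dvd fps_X" using fps_dvd_iff[of "EE :: 'k fps" fps_X] EEnz by simp
  then show ?thesis by (simp add: mult.commute)
qed

lemma inv_e: "inverse (fps_to_fls (EE :: 'k::field_char_0 fps)) = fps_to_fls (fps_X / EE) * fls_shift 1 1"
proof -
  have "fps_to_fls (EE :: 'k fps) * (fps_to_fls (fps_X / EE) * fls_shift 1 1) = fls_X * fls_shift 1 1"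
    by (simp only: mult.assoc[symmetric] fls_times_fps_to_fls[symmetric] EE_Bf fps_X_to_fls)
  also have "\<dots> = 1" by (simp add: fls_shifted_times_simps)
  finally show ?thesis by (rule inverse_unique)
qed

lemma coef_one:
  assumes "r \<ge> 1"
  shows "fls_nth ((logser :: 'k::field_char_0 fls) powi (- int r)) 1 =
     - of_nat r * bernoulli_num (r + 1) / fact (r + 1)"
proof -
  define e where "e = fps_to_fls (EE :: 'k fps)"
  define ie where "ie = inverse e"
  have pw: "e powi (-1-1) = ie ^ 2" by (simp add: ie_def power_int_minus power_inverse)
  have die: "fls_deriv ie = - fps_to_fls (fps_exp 1) * ie ^ 2"
    unfolding ie_def e_def fls_inverse_deriv deriv_EE by simp
  have "fls_nth ((logser :: 'k fls) powi (- int r)) 1 =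
      fls_residue (e powi (-1-1) * fls_X_intpow (- int r) * fps_to_fls (fps_exp 1))"
    unfolding coef_formula e_def ..
  also have "e powi (-1-1) * fls_X_intpow (- int r) * fps_to_fls (fps_exp 1) = - (fls_deriv ie * fls_X_intpow (- int r))"
    unfolding pw die by (simp add: algebra_simps)
  also have "fls_residue (- (fls_deriv ie * fls_X_intpow (- int r))) = - fls_residue (fls_deriv ie * fls_X_intpow (- int r))"
    by simp
  also have "fls_residue (fls_deriv ie * fls_X_intpow (- int r)) = - fls_residue (ie * fls_deriv (fls_X_intpow (- int r)))"
    by (rule fls_residue_times_deriv)
  also have "ie * fls_deriv (fls_X_intpow (- int r)) = fls_const (- of_nat r) * (fps_to_fls (fps_X / EE) * fls_X_intpow (- int (r + 2)))"
    unfolding fls_deriv_X_intpow ie_def e_def inv_e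
    by (simp add: fls_shifted_times_simps fls_of_int algebra_simps)
  also have "fls_residue \<dots> = - of_nat r * (fps_X / EE) $ (r + 1)"
    unfolding fls_residue_fls_const_times(1) using res_shift_fps[of "r+2" "fps_X / EE :: 'k fps"] by simp
  also have "(fps_X / EE :: 'k fps) $ (r + 1) = bernoulli_num (r + 1) / fact (r + 1)"
    unfolding bernoulli_num_def using fact_nonzero[of "r+1", where 'a='k] by (simp del: fact_Suc)
  finally show ?thesis by simp
qed

lemma logser_nz: "(logser :: 'k::field_char_0 fls) \<noteq> 0"
proof -
  have "fls_nth (logser :: 'k fls) 1 = 1" by (simp add: logser_def fps_ln_nth)
  then show ?thesis by auto
qed

lemma logser_sd: "fls_subdegree (logser :: 'k::field_char_0 fls) = 1"
proof -
  have "subdegree (fps_ln 1 :: 'k fps) = 1" by (rule subdegreeI) (auto simp: fps_ln_nth less_Suc_eq)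
  then show ?thesis by (simp add: logser_def fls_subdegree_fls_to_fps)
qed

lemma coef_below:
  assumes "m < n"
  shows "fls_nth ((logser :: 'k::field_char_0 fls) powi n) m = 0"
proof -
  have sd: "fls_subdegree ((logser :: 'k fls) powi n) = n" by (simp add: logser_sd)
  show ?thesis by (rule fls_eq0_below_subdegree) (simp only: sd assms)
qed

lemma Bf_2: "(fps_X / EE :: 'k::field_char_0 fps) $ 2 = 1/12"
proof -
  define B where "B = (fps_X / EE :: 'k fps)"
  have eq: "EE * B = fps_X" unfolding B_def by (rule EE_Bf)
  have c1: "(EE * B) $ 1 = 1" using eq by simp
  have c2: "(EE * B) $ 2 = 0" using eq by simp
  have c3: "(EE * B) $ 3 = 0" using eq by simp
  have b0: "B $ 0 = 1" using c1 by (simp add: fps_mult_nth numeral_2_eq_2)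
  have "1 + 2 * B $ 1 = 0" using c2 b0 by (simp add: fps_mult_nth numeral_2_eq_2 atMost_Suc field_simps)
  then have b1: "B $ 1 = -1/2" by (simp add: field_simps eq_neg_iff_add_eq_0 add.commute)
  have "1 + (3 * B $ 1 + 6 * B $ 2) = 0" using c3 b0 by (simp add: fps_mult_nth numeral_3_eq_3 numeral_2_eq_2 atMost_Suc field_simps)
  then have h: "1 + (3 * (-1/2) + 6 * B $ 2) = (0::'k)" by (simp only: b1)
  have "B $ 2 = (1 + (3 * (-1/2) + 6 * B $ 2) + 1/2) / 6" by (simp add: field_simps)
  also have "\<dots> = 1/12" unfolding h by simp
  finally have "B $ 2 = 1/12" .
  then show ?thesis by (simp add: B_def)
qed

lemma coef_m1_m1: "fls_nth ((logser :: 'k::field_char_0 fls) powi (-1)) (-1) = 1"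
  using coef_neg[of 1 0, where 'k='k] by simp

lemma coef_m1_1: "fls_nth ((logser :: 'k::field_char_0 fls) powi (-1)) 1 = - 1/12"
  using coef_one[of 1, where 'k='k] Bf_2[where 'k='k] by (simp add: bernoulli_num_def numeral_2_eq_2)



lemma sum_fun_apply: "(\<Sum>i\<in>S. f i) x = (\<Sum>i\<in>S. f i x)"
  by (induction S rule: infinite_finite_induct) auto

lemma scal_0 [simp]: "scal 0 v = 0" by (simp add: scal_def fun_eq_iff)
lemma scal_zero [simp]: "scal c 0 = 0" by (simp add: scal_def fun_eq_iff)
lemma scal_1 [simp]: "scal 1 v = v" by (simp add: scal_def fun_eq_iff)
lemma scal_scal [simp]: "scal c (scal d v) = scal (c * d) v" by (simp add: scal_def fun_eq_iff)
lemma scal_add: "scal c (v + w) = scal c v + scal c w" by (simp add: scal_def fun_eq_iff algebra_simps)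
lemma scal_add_left: "scal (c + d) v = scal c v + scal d v" by (simp add: scal_def fun_eq_iff algebra_simps)
lemma scal_minus_left: "scal (- c) v = - scal c v" by (simp add: scal_def fun_eq_iff)
lemma scal_sum: "scal c (\<Sum>i\<in>S. f i) = (\<Sum>i\<in>S. scal c (f i))"
  by (simp add: scal_def fun_eq_iff sum_fun_apply sum_distrib_left)
lemma scal_sum_left: "scal (\<Sum>i\<in>S. f i) v = (\<Sum>i\<in>S. scal (f i) v)"
  by (simp add: scal_def fun_eq_iff sum_fun_apply sum_distrib_right)

lemma fin_sum_eq:
  assumes "finite S" "\<And>i. i \<notin> S \<Longrightarrow> f i = 0"
  shows "fin_sum f = sum f S"
  unfolding fin_sum_def
  by (rule sum.mono_neutral_left) (use assms in auto)

lemma mulvar_add: "mulvar im (v + w) = mulvar im v + mulvar im w"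
  by (auto simp: mulvar_def fun_eq_iff)
lemma dervar_add: "dervar im (v + w) = dervar im v + dervar im w"
  by (auto simp: dervar_def fun_eq_iff algebra_simps)
lemma mulvar_scal: "mulvar im (scal c v) = scal c (mulvar im v)"
  by (auto simp: mulvar_def scal_def fun_eq_iff)
lemma dervar_scal: "dervar im (scal c v) = scal c (dervar im v)"
  by (auto simp: dervar_def scal_def fun_eq_iff algebra_simps)

lemma hmode_add: "hmode G b m (v + w) = hmode G b m v + hmode G b m w"
  by (auto simp: hmode_def fun_eq_iff mulvar_add dervar_add algebra_simps sum.distrib)

lemma hmode_scal: "hmode G b m (scal c v) = scal c (hmode G b m v)"
  unfolding hmode_def mulvar_scal dervar_scal by (auto simp: fun_eq_iff scal_def algebra_simps sum_distrib_left)

lemma hmode_zero [simp]: "hmode G b m 0 = 0"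
  using hmode_scal[of G b m 0 0] by simp

lemma hmode_zero' [simp]: "hmode G b m (\<lambda>x. 0) = (\<lambda>x. 0)"
  using hmode_zero[of G b m] unfolding zero_fun_def .

lemma hmode_sum: "hmode G b m (\<Sum>i\<in>S. f i) = (\<Sum>i\<in>S. hmode G b m (f i))"
proof (induction S rule: infinite_finite_induct)
  case (insert x F)
  have "hmode G b m (sum f (insert x F)) = hmode G b m (f x + sum f F)"
    using sum.insert[OF insert(1,2), of f] by (rule arg_cong)
  also have "\<dots> = hmode G b m (f x) + (\<Sum>i\<in>F. hmode G b m (f i))" by (simp only: hmode_add insert.IH)
  also have "\<dots> = (\<Sum>i\<in>insert x F. hmode G b m (f i))" using sum.insert[OF insert(1,2)] by (rule sym)
  finally show ?case .
next
  case (infinite A)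
  have "sum f A = 0" "(\<Sum>i\<in>A. hmode G b m (f i)) = 0" using infinite by (rule sum.infinite)+
  then show ?case by (simp only: hmode_zero)
qed (simp only: sum.empty hmode_zero)

lemma hmode_minus: "hmode G b m (- v) = - hmode G b m v"
  using hmode_scal[of G b m "-1" v] by (simp add: scal_minus_left)

lemma hmode_diff: "hmode G b m (v - w) = hmode G b m v - hmode G b m w"
  using hmode_add[of G b m v "- w"] hmode_minus[of G b m w] by simp

abbreviation ue :: "'n \<Rightarrow> 'n \<Rightarrow> 'k::field_char_0" where "ue j \<equiv> (\<lambda>l. if l = j then 1 else 0)"

lemma hmode_pos_at:
  assumes "m > 0"
  shows "hmode G b m v (\<alpha>, \<mu>) = of_int m * (\<Sum>j\<in>UNIV. latform G b (ue j) *
      (of_nat (Poly_Mapping.lookup \<mu> (j, nat m - 1) + 1) * v (\<alpha>, \<mu> + Poly_Mapping.single (j, nat m - 1) 1)))"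
  using assms by (simp add: hmode_def dervar_def)

lemma hmode_neg_at:
  assumes "n > 0"
  shows "hmode G b (-n) v (\<alpha>, \<mu>) = (\<Sum>i\<in>UNIV. b i *
      (if 0 < Poly_Mapping.lookup \<mu> (i, nat n - 1) then v (\<alpha>, \<mu> - Poly_Mapping.single (i, nat n - 1) 1) else 0))"
  using assms by (simp add: hmode_def mulvar_def cong: if_cong)

lemma hmode_zero_at:
  shows "hmode G b 0 v (\<alpha>, \<mu>) = latform G b (\<lambda>j. of_int (\<alpha> j)) * v (\<alpha>, \<mu>)"
  by (simp add: hmode_def)

lemma latform_unit_sum:
  "(\<Sum>j\<in>UNIV. latform G a (ue j) * a j) = latform G (a :: 'n::finite \<Rightarrow> 'k::field_char_0) a"
proof -
  have "latform G a (ue j) = (\<Sum>i\<in>UNIV. a i * of_int (G$i$j))" for j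
    unfolding latform_def by (simp add: if_distrib cong: if_cong)
  then have "(\<Sum>j\<in>UNIV. latform G a (ue j) * a j) = (\<Sum>j\<in>UNIV. \<Sum>i\<in>UNIV. a i * of_int (G$i$j) * a j)"
    by (simp add: sum_distrib_right)
  also have "\<dots> = (\<Sum>i\<in>UNIV. \<Sum>j\<in>UNIV. a i * of_int (G$i$j) * a j)" by (rule sum.swap)
  finally show ?thesis unfolding latform_def .
qed

lemma pm_key:
  fixes \<mu> :: "('n \<times> nat) \<Rightarrow>\<^sub>0 nat" and v :: "'b \<times> (('n \<times> nat) \<Rightarrow>\<^sub>0 nat) \<Rightarrow> 'k::field_char_0"
  shows "of_nat (Poly_Mapping.lookup \<mu> k + 1) *
     (if 0 < Poly_Mapping.lookup (\<mu> + Poly_Mapping.single k 1) l then v (\<alpha>, \<mu> + Poly_Mapping.single k 1 - Poly_Mapping.single l 1) else 0)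
   = (if 0 < Poly_Mapping.lookup \<mu> l then of_nat (Poly_Mapping.lookup (\<mu> - Poly_Mapping.single l 1) k + 1) *
        v (\<alpha>, \<mu> - Poly_Mapping.single l 1 + Poly_Mapping.single k 1) else 0)
     + (if k = l then v (\<alpha>, \<mu>) else 0)"
proof (cases "k = l")
  case True
  show ?thesis
  proof (cases "0 < Poly_Mapping.lookup \<mu> l")
    case pos: True
    have e: "\<mu> - Poly_Mapping.single l 1 + Poly_Mapping.single l 1 = \<mu>"
      by (rule poly_mapping_eqI) (use pos in \<open>auto simp: lookup_add lookup_minus lookup_single when_def\<close>)
    have l: "Poly_Mapping.lookup (\<mu> - Poly_Mapping.single l 1) l + 1 = Poly_Mapping.lookup \<mu> l"
      using pos by (simp add: lookup_minus lookup_single)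
    show ?thesis using pos unfolding True e add_diff_cancel_right' l
      by (simp add: lookup_add lookup_single algebra_simps)
  next
    case npos: False
    then show ?thesis using True by (simp add: lookup_add lookup_single)
  qed
next
  case False
  have l1: "Poly_Mapping.lookup (\<mu> + Poly_Mapping.single k 1) l = Poly_Mapping.lookup \<mu> l"
    using False by (simp add: lookup_add lookup_single)
  have l2: "Poly_Mapping.lookup (\<mu> - Poly_Mapping.single l 1) k = Poly_Mapping.lookup \<mu> k"
    using False by (simp add: lookup_minus lookup_single)
  have e: "\<mu> + Poly_Mapping.single k 1 - Poly_Mapping.single l 1 = \<mu> - Poly_Mapping.single l 1 + Poly_Mapping.single k 1"
    by (rule poly_mapping_eqI) (use False in \<open>auto simp: lookup_add lookup_minus lookup_single when_def\<close>)
  show ?thesis unfolding l1 l2 e using False by simp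
qed

lemma comm_pos:
  fixes G :: "int^'n::finite^'n" and a :: "'n \<Rightarrow> 'k::field_char_0"
  assumes m0: "m > 0" and n0: "n > 0"
  shows "hmode G a m (hmode G a (-n) v) =
    hmode G a (-n) (hmode G a m v) + (if m = n then scal (of_int m * latform G a a) v else 0)"
proof (rule ext)
  fix x :: "'n vbasis"
  obtain \<alpha> \<mu> where x: "x = (\<alpha>, \<mu>)" by (cases x)
  define p where "p = nat m - 1"
  define q where "q = nat n - 1"
  define lf where "lf j = latform G a (ue j)" for j
  define M where "M i j = (if 0 < Poly_Mapping.lookup (\<mu> + Poly_Mapping.single (j,p) 1) (i,q)
       then v (\<alpha>, \<mu> + Poly_Mapping.single (j,p) 1 - Poly_Mapping.single (i,q) 1) else 0)" for i j :: 'n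
  define N where "N i j = (if 0 < Poly_Mapping.lookup \<mu> (i,q) then of_nat (Poly_Mapping.lookup (\<mu> - Poly_Mapping.single (i,q) 1) (j,p) + 1) *
        v (\<alpha>, \<mu> - Poly_Mapping.single (i,q) 1 + Poly_Mapping.single (j,p) 1) else 0)" for i j :: 'n
  define D where "D i j = (if (j,p) = (i,q) then v (\<alpha>, \<mu>) else (0::'k))" for i j :: 'n
  have key: "of_nat (Poly_Mapping.lookup \<mu> (j,p) + 1) * M i j = N i j + D i j" for i j
    unfolding M_def N_def D_def by (rule pm_key)
  have "hmode G a m (hmode G a (-n) v) x =
     of_int m * (\<Sum>j\<in>UNIV. lf j * (of_nat (Poly_Mapping.lookup \<mu> (j,p) + 1) * (\<Sum>i\<in>UNIV. a i * M i j)))"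
    unfolding x hmode_pos_at[OF m0] hmode_neg_at[OF n0] p_def[symmetric] q_def[symmetric] lf_def M_def ..
  also have "\<dots> = (\<Sum>j\<in>UNIV. \<Sum>i\<in>UNIV. of_int m * lf j * a i * (of_nat (Poly_Mapping.lookup \<mu> (j,p) + 1) * M i j))"
    by (simp add: sum_distrib_left mult_ac)
  also have "\<dots> = (\<Sum>j\<in>UNIV. \<Sum>i\<in>UNIV. of_int m * lf j * a i * N i j) + (\<Sum>j\<in>UNIV. \<Sum>i\<in>UNIV. of_int m * lf j * a i * D i j)"
    unfolding key by (simp add: distrib_left sum.distrib)
  also have "(\<Sum>j\<in>UNIV. \<Sum>i\<in>UNIV. of_int m * lf j * a i * N i j) = hmode G a (-n) (hmode G a m v) x"
  proof -
    have "hmode G a (-n) (hmode G a m v) x = (\<Sum>i\<in>UNIV. a i * (if 0 < Poly_Mapping.lookup \<mu> (i,q) then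
       of_int m * (\<Sum>j\<in>UNIV. lf j * (of_nat (Poly_Mapping.lookup (\<mu> - Poly_Mapping.single (i,q) 1) (j,p) + 1) *
        v (\<alpha>, \<mu> - Poly_Mapping.single (i,q) 1 + Poly_Mapping.single (j,p) 1))) else 0))"
      unfolding x hmode_pos_at[OF m0] hmode_neg_at[OF n0] p_def[symmetric] q_def[symmetric] lf_def ..
    also have "\<dots> = (\<Sum>i\<in>UNIV. \<Sum>j\<in>UNIV. of_int m * lf j * a i * N i j)"
      unfolding N_def by (rule sum.cong[OF refl]) (auto simp: sum_distrib_left mult_ac)
    also have "\<dots> = (\<Sum>j\<in>UNIV. \<Sum>i\<in>UNIV. of_int m * lf j * a i * N i j)" by (rule sum.swap)
    finally show ?thesis by simp
  qed
  also have "(\<Sum>j\<in>UNIV. \<Sum>i\<in>UNIV. of_int m * lf j * a i * D i j) = (if m = n then scal (of_int m * latform G a a) v else 0) x"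
  proof -
    have pq: "(p = q) = (m = n)" using m0 n0 by (auto simp: p_def q_def)
    have "(\<Sum>j\<in>UNIV. \<Sum>i\<in>UNIV. of_int m * lf j * a i * D i j) = (\<Sum>j\<in>UNIV. if p = q then of_int m * lf j * a j * v (\<alpha>, \<mu>) else 0)"
      unfolding D_def by (rule sum.cong[OF refl]) (auto simp: if_distrib cong: if_cong)
    also have "\<dots> = (if m = n then of_int m * latform G a a * v (\<alpha>, \<mu>) else 0)"
    proof (cases "m = n")
      case True
      have "(\<Sum>j\<in>UNIV. of_int m * lf j * a j * v (\<alpha>, \<mu>)) = of_int m * (\<Sum>j\<in>UNIV. lf j * a j) * v (\<alpha>, \<mu>)"
        by (simp add: sum_distrib_left sum_distrib_right mult_ac)
      then show ?thesis using True pq latform_unit_sum[of G a] unfolding lf_def by simp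
    qed (use pq in simp)
    finally show ?thesis by (simp add: x scal_def)
  qed
  finally show "hmode G a m (hmode G a (-n) v) x =
    (hmode G a (-n) (hmode G a m v) + (if m = n then scal (of_int m * latform G a a) v else 0)) x" by simp
qed



definition hc :: "nat \<Rightarrow> nat \<Rightarrow> 'k::field_char_0" where
  "hc t k = of_nat (t choose (2*k)) * fact (2*k) / (fact k * (-24) ^ k)"

lemma choose_id: "(t choose Suc (2*k)) * Suc (2*k) = (t choose (2*k)) * (t - 2*k)"
  using binomial_absorption[of "2*k" t] binomial_absorb_comp[of t "2*k"] by (simp add: mult_ac)

lemma hc_0: "hc t 0 = 1" by (simp add: hc_def)

lemma hc_big: "t < 2 * k \<Longrightarrow> hc t k = 0" by (simp add: hc_def)

lemma aux_field:
  fixes X F1 F2 P K :: "'k::field_char_0"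
  assumes "F1 \<noteq> 0" "P \<noteq> 0" "K + 1 \<noteq> 0"
  shows "X * ((2*K+2)*(2*K+1)*F2) / ((K+1)*F1*(-24*P)) = (-1/12)*(X*(2*K+1)*F2/(F1*P))"
proof -
  have "X * ((2*K+2)*(2*K+1)*F2) = (K+1) * (2*X*(2*K+1)*F2)" by (simp add: algebra_simps)
  moreover have "(K+1)*F1*(-24*P) = (K+1) * (F1*(-24*P))" by (simp add: algebra_simps)
  ultimately have "X * ((2*K+2)*(2*K+1)*F2) / ((K+1)*F1*(-24*P)) = ((K+1) * (2*X*(2*K+1)*F2)) / ((K+1) * (F1*(-24*P)))"
    by (simp only:)
  also have "\<dots> = (2*X*(2*K+1)*F2) / (F1*(-24*P))"
    using assms(3) by (rule mult_divide_mult_cancel_left)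
  also have "\<dots> = (-1/12)*(X*(2*K+1)*F2/(F1*P))" using assms(1,2) by (simp add: field_simps)
  finally show ?thesis .
qed

lemma hc_rec: "(hc (Suc t) (Suc k) :: 'k::field_char_0) = hc t (Suc k) + (-1/12) * (hc t k * of_nat (t - 2*k))"
proof -
  have c: "(of_nat (t choose Suc (2*k)) :: 'k) * of_nat (Suc (2*k)) = of_nat (t choose (2*k)) * of_nat (t - 2*k)"
    by (simp only: of_nat_mult[symmetric] choose_id)
  have e: "2 * Suc k = Suc (Suc (2*k))" by simp
  have "(hc (Suc t) (Suc k) :: 'k) = hc t (Suc k) + of_nat (t choose Suc (2*k)) * fact (Suc (Suc (2*k))) / (fact (Suc k) * (-24) ^ Suc k)"
    unfolding hc_def e binomial_Suc_Suc by (simp add: add_divide_distrib distrib_right)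
  also have "of_nat (t choose Suc (2*k)) * fact (Suc (Suc (2*k))) / (fact (Suc k) * (-24) ^ Suc k) =
     (-1/12) * ((of_nat (t choose Suc (2*k)) * of_nat (Suc (2*k))) * fact (2*k) / (fact k * (-24) ^ k) :: 'k)"
  proof -
    have f1: "fact (Suc (Suc (2*k))) = ((2 * of_nat k+2) * (2 * of_nat k+1) * fact (2*k) :: 'k)"
      by (simp add: algebra_simps)
    have f2: "fact (Suc k) = ((of_nat k + 1) * fact k :: 'k)" by (simp add: algebra_simps)
    have p: "(-24::'k) ^ Suc k = -24 * (-24) ^ k" by simp
    have nz: "(of_nat k + 1 :: 'k) \<noteq> 0" by (metis of_nat_Suc of_nat_eq_0_iff add.commute nat.simps(3))
    show ?thesis unfolding f1 f2 p
      using aux_field[of "fact k :: 'k" "(-24)^k" "of_nat k" "of_nat (t choose Suc (2*k))" "fact (2*k)"] nz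
      by (simp add: mult.assoc)
  qed
  also have "\<dots> = (-1/12) * (hc t k * of_nat (t - 2*k))"
    unfolding c hc_def by (simp add: mult_ac)
  finally show ?thesis .
qed



lemma comm_zero:
  fixes G :: "int^'n::finite^'n" and a :: "'n \<Rightarrow> 'k::field_char_0"
  assumes n0: "n > 0"
  shows "hmode G a 0 (hmode G a (-n) v) = hmode G a (-n) (hmode G a 0 v)"
proof (rule ext)
  fix x :: "'n vbasis"
  obtain \<alpha> \<mu> where x: "x = (\<alpha>, \<mu>)" by (cases x)
  show "hmode G a 0 (hmode G a (-n) v) x = hmode G a (-n) (hmode G a 0 v) x"
    unfolding x hmode_zero_at hmode_neg_at[OF n0]
    by (simp add: sum_distrib_left mult_ac if_distrib cong: if_cong)
qed

lemma latform_zero_right: "latform G b (\<lambda>j. 0) = 0"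
  by (simp add: latform_def)

lemma vac_kill:
  fixes G :: "int^'n::finite^'n" and a :: "'n \<Rightarrow> 'k::field_char_0"
  assumes "m \<ge> 0"
  shows "hmode G a m vac = 0"
proof (rule ext)
  fix x :: "'n vbasis"
  obtain \<alpha> \<mu> where x: "x = (\<alpha>, \<mu>)" by (cases x)
  show "hmode G a m vac x = 0 x"
  proof (cases "m = 0")
    case True
    show ?thesis unfolding x True hmode_zero_at
      by (auto simp: vac_def latform_zero_right zero_fun_def)
  next
    case False
    then have m0: "m > 0" using assms by simp
    have "\<mu> + Poly_Mapping.single k 1 \<noteq> 0" for k
    proof
      assume "\<mu> + Poly_Mapping.single k 1 = 0"
      then have "Poly_Mapping.lookup (\<mu> + Poly_Mapping.single k 1) k = 0" by simp
      then show False by (simp add: lookup_add)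
    qed
    then show ?thesis unfolding x hmode_pos_at[OF m0] by (simp add: vac_def)
  qed
qed

definition XX :: "int^'n^'n \<Rightarrow> ('n::finite \<Rightarrow> 'k::field_char_0) \<Rightarrow> nat \<Rightarrow> ('n, 'k) vvec" where
  "XX G a j = (hmode G a (-1) ^^ j) vac"

lemma XX_Suc: "XX G a (Suc j) = hmode G a (-1) (XX G a j)"
  by (simp add: XX_def)

lemma XX_0: "XX G a 0 = vac" by (simp add: XX_def)

lemma XX_ge2:
  assumes "m \<ge> 2"
  shows "hmode G a m (XX G a j) = 0"
proof (induction j)
  case 0 then show ?case using assms by (simp add: XX_0 vac_kill)
next
  case (Suc j)
  have "hmode G a m (XX G a (Suc j)) = hmode G a (-1) (hmode G a m (XX G a j))"
    using comm_pos[of m 1 G a "XX G a j"] assms by (simp add: XX_Suc)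
  then show ?case using Suc by simp
qed

lemma XX_0mode: "hmode G a 0 (XX G a j) = 0"
proof (induction j)
  case 0 then show ?case by (simp add: XX_0 vac_kill)
next
  case (Suc j)
  have "hmode G a 0 (XX G a (Suc j)) = hmode G a (-1) (hmode G a 0 (XX G a j))"
    using comm_zero[of 1 G a "XX G a j"] by (simp add: XX_Suc)
  then show ?case using Suc by simp
qed

lemma XX_1:
  assumes "latform G a a = 1"
  shows "hmode G a 1 (XX G a j) = scal (of_nat j) (XX G a (j - 1))"
proof (induction j)
  case 0 then show ?case by (simp add: XX_0 vac_kill)
next
  case (Suc j)
  have "hmode G a 1 (XX G a (Suc j)) = hmode G a (-1) (hmode G a 1 (XX G a j)) + XX G a j"
    using comm_pos[of 1 1 G a "XX G a j"] assms by (simp add: XX_Suc)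
  also have "\<dots> = scal (of_nat j) (XX G a j) + XX G a j"
    using Suc by (cases j) (simp_all add: hmode_scal XX_Suc zero_fun_def)
  also have "\<dots> = scal (of_nat (Suc j)) (XX G a j)"
    by (simp add: scal_def fun_eq_iff algebra_simps)
  finally show ?case by simp
qed

abbreviation cf :: "int \<Rightarrow> int \<Rightarrow> 'k::field_char_0" where
  "cf n m \<equiv> fls_nth (logser powi n) m"

lemma sq_good:
  fixes G :: "int^'n::finite^'n" and a :: "'n \<Rightarrow> 'k::field_char_0"
  assumes "\<And>m. m \<ge> 2 \<Longrightarrow> hmode G a m v = 0"
  shows "sqmode G a n v = (\<Sum>m\<in>{n..1}. scal (cf n m) (hmode G a m v))"
  unfolding sqmode_def
proof (rule fin_sum_eq)
  fix m assume "m \<notin> {n..1}"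
  then have "m < n \<or> m \<ge> 2" by auto
  then show "scal (cf n m) (hmode G a m v) = 0"
    using assms coef_below[of m n, where 'k='k] by auto
qed simp

definition YY :: "int^'n^'n \<Rightarrow> ('n::finite \<Rightarrow> 'k::field_char_0) \<Rightarrow> nat \<Rightarrow> ('n, 'k) vvec" where
  "YY G a t = (\<Sum>k\<le>t. scal (hc t k) (XX G a (t - 2*k)))"

lemma YY_0: "YY G a 0 = vac" by (simp add: YY_def hc_0 XX_0)

lemma YY_ge2:
  assumes "m \<ge> 2" shows "hmode G a m (YY G a t) = 0"
  unfolding YY_def hmode_sum hmode_scal XX_ge2[OF assms] by simp

lemma YY_0mode: "hmode G a 0 (YY G a t) = 0"
  unfolding YY_def hmode_sum hmode_scal XX_0mode by simp

lemma YY_m1: "hmode G a (-1) (YY G a t) = (\<Sum>k\<le>Suc t. scal (hc t k) (XX G a (Suc t - 2*k)))"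
proof -
  have "hmode G a (-1) (YY G a t) = (\<Sum>k\<le>t. scal (hc t k) (XX G a (Suc t - 2*k)))"
    unfolding YY_def hmode_sum hmode_scal XX_Suc[symmetric]
  proof (rule sum.cong[OF refl])
    fix k assume "k \<in> {..t}"
    show "scal (hc t k) (XX G a (Suc (t - 2 * k))) = scal (hc t k) (XX G a (Suc t - 2 * k))"
    proof (cases "2 * k \<le> t")
      case True then have "Suc (t - 2 * k) = Suc t - 2 * k" by simp
      then show ?thesis by simp
    next
      case False then show ?thesis by (simp add: hc_big)
    qed
  qed
  also have "\<dots> = (\<Sum>k\<le>Suc t. scal (hc t k) (XX G a (Suc t - 2*k)))"
    by (simp add: hc_big)
  finally show ?thesis .
qed

lemma YY_1:
  assumes "latform G a a = 1"
  shows "hmode G a 1 (YY G a t) = (\<Sum>k\<le>t. scal (hc t k * of_nat (t - 2*k)) (XX G a (t - 2*k - 1)))"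
  unfolding YY_def hmode_sum hmode_scal XX_1[OF assms] by (simp add: mult.commute)

lemma set_m1_1: "{-1..1::int} = {-1, 0, 1}" by auto

lemma YY_step:
  fixes G :: "int^'n::finite^'n" and a :: "'n \<Rightarrow> 'k::field_char_0"
  assumes lat: "latform G a a = 1"
  shows "sqmode G a (-1) (YY G a t) = YY G a (Suc t)"
proof -
  have "sqmode G a (-1) (YY G a t) = (\<Sum>m\<in>{-1..1}. scal (cf (-1) m) (hmode G a m (YY G a t)))"
    by (rule sq_good) (rule YY_ge2)
  also have "\<dots> = hmode G a (-1) (YY G a t) + scal (-1/12) (hmode G a 1 (YY G a t))"
    unfolding set_m1_1 using coef_m1_m1[where 'k='k] coef_m1_1[where 'k='k] by (simp add: YY_0mode)
  also have "\<dots> = scal (hc t 0) (XX G a (Suc t)) + ((\<Sum>k\<le>t. scal (hc t (Suc k)) (XX G a (Suc t - 2*Suc k)))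
      + (\<Sum>k\<le>t. scal (-1/12 * (hc t k * of_nat (t - 2*k))) (XX G a (Suc t - 2 * Suc k))))"
  proof -
    have e: "Suc t - 2 * Suc k = t - 2 * k - 1" for k by simp
    show ?thesis
      unfolding YY_m1 YY_1[OF lat] sum.atMost_Suc_shift scal_sum e by (simp add: add.assoc)
  qed
  also have "\<dots> = YY G a (Suc t)"
    unfolding YY_def sum.atMost_Suc_shift hc_rec scal_add_left sum.distrib by (simp add: hc_0)
  finally show ?thesis .
qed

lemma YY_pow:
  fixes G :: "int^'n::finite^'n" and a :: "'n \<Rightarrow> 'k::field_char_0"
  assumes lat: "latform G a a = 1"
  shows "(sqmode G a (-1) ^^ t) vac = YY G a t"
  by (induction t) (simp_all add: YY_0 YY_step[OF lat])



lemma stirl_eq: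
  assumes "r \<ge> 1"
  shows "fact (r - 1) * (cf (- int r) (- int n - 1) :: 'k::field_char_0) = fact n * stirlS r n"
proof -
  have "fact (r - 1) * (cf (- int r) (- int n - 1) :: 'k) = (\<Sum>i\<le>n. of_nat (n choose i) * (-1)^(n-i) * of_nat (i+1)^(r-1))"
    by (rule coef_neg[OF assms])
  also have "\<dots> = (\<Sum>i\<le>n. of_nat (n choose i) * (-1)^(n+i) * of_nat (i+1)^(r-1))"
  proof (rule sum.cong[OF refl])
    fix i assume "i \<in> {..n}"
    then have e: "n + i = (n - i) + 2 * i" by simp
    have "(-1::'k)^(n+i) = (-1)^(n-i) * (-1)^(2*i)" unfolding e by (rule power_add)
    moreover have "(-1::'k)^(2*i) = 1" by (simp add: power_mult)
    ultimately have "(-1::'k)^(n+i) = (-1)^(n-i)" by simp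
    then show "of_nat (n choose i) * (-1)^(n-i) * of_nat (i+1)^(r-1) = of_nat (n choose i) * (-1)^(n+i) * (of_nat (i+1)^(r-1) :: 'k)"
      by simp
  qed
  also have "\<dots> = fact n * stirlS r n" by (simp add: stirlS_def)
  finally show ?thesis .
qed

lemma stirl_zero:
  assumes "r \<ge> 1" "n \<ge> r"
  shows "(stirlS r n :: 'k::field_char_0) = 0"
proof -
  have "(cf (- int r) (- int n - 1) :: 'k) = 0" by (rule coef_below) (use assms in simp)
  then have "fact n * (stirlS r n :: 'k) = 0" using stirl_eq[OF assms(1), of n, where 'k='k] by simp
  then show ?thesis by simp
qed

lemma set_r: "{- int r..1} = insert 1 (insert 0 ((\<lambda>n. - int n - 1) ` {..<r}))"
proof (rule set_eqI, rule iffI)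
  fix x assume x: "x \<in> {- int r..1}"
  show "x \<in> insert 1 (insert 0 ((\<lambda>n. - int n - 1) ` {..<r}))"
  proof (cases "x \<ge> 0")
    case True then show ?thesis using x by auto
  next
    case False
    then have "x = - int (nat (- x - 1)) - 1" "nat (- x - 1) < r" using x by auto
    then show ?thesis by blast
  qed
qed auto

lemma coefA: "(fact n * stirlS r n * hc t k :: 'k::field_char_0) =
   of_nat (t choose (2*k)) * fact n * stirlS r n * fact (2*k) / (fact k * (-24) ^ k)"
  by (simp add: hc_def)

lemma coefB:
  assumes "r \<ge> 1"
  shows "fact (r - 1) * (- of_nat r * bernoulli_num (r + 1) / fact (r + 1)) * (hc t k * of_nat (t - 2*k)) =
    - (of_nat (t choose (2*k+1)) * bernoulli_num (r + 1) * fact (2*k+1) / (fact k * of_nat (r + 1) * (-24) ^ k) :: 'k::field_char_0)"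
proof -
  define F where "F = (fact (r - 1) :: 'k)"
  define R where "R = (of_nat r :: 'k)"
  define B where "B = (bernoulli_num (r + 1) :: 'k)"
  define C0 where "C0 = (of_nat (t choose (2*k)) :: 'k)"
  define C1 where "C1 = (of_nat (t choose (2*k+1)) :: 'k)"
  define T where "T = (of_nat (t - 2*k) :: 'k)"
  define M where "M = (of_nat (2*k+1) :: 'k)"
  define F2 where "F2 = (fact (2*k) :: 'k)"
  define D where "D = (fact k :: 'k)"
  define P where "P = ((-24) ^ k :: 'k)"
  have Fnz: "F \<noteq> 0" and Rnz: "R \<noteq> 0" and R1nz: "R + 1 \<noteq> 0" and Dnz: "D \<noteq> 0" and Pnz: "P \<noteq> 0"
    using assms by (simp_all add: F_def R_def D_def P_def) (metis of_nat_Suc of_nat_eq_0_iff add.commute nat.simps(3))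
  have fr1: "fact (r + 1) = (R + 1) * R * F"
  proof -
    have "r + 1 = Suc (Suc (r - 1))" using assms by simp
    then have "(fact (r + 1) :: 'k) = of_nat (Suc (Suc (r - 1))) * (of_nat (Suc (r - 1)) * fact (r - 1))"
      by (simp only: fact_Suc)
    also have "of_nat (Suc (Suc (r - 1))) = R + 1" using assms by (simp add: R_def)
    also have "of_nat (Suc (r - 1)) = R" using assms by (simp add: R_def)
    finally show ?thesis by (simp add: F_def mult_ac)
  qed
  have ct: "C0 * T = C1 * M"
    unfolding C0_def T_def C1_def M_def using choose_id[of t k]
    by (metis (mono_tags) Suc_eq_plus1 mult.commute of_nat_mult)
  have f21: "fact (2*k+1) = M * F2" by (simp add: M_def F2_def)
  have hc: "hc t k = C0 * F2 / (D * P)" by (simp add: hc_def C0_def F2_def D_def P_def)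
  have s0: "C0 * F2 / (D * P) * T = (C0 * T) * F2 / (D * P)" by simp
  have s1: "F * (- R * B / ((R + 1) * R * F)) = - B / (R + 1)"
  proof -
    have "F * (- R * B / ((R + 1) * R * F)) = ((- B) * (R * F)) / ((R + 1) * (R * F))"
      by (simp add: mult_ac)
    also have "\<dots> = - B / (R + 1)" using Fnz Rnz by (subst mult_divide_mult_cancel_right) simp_all
    finally show ?thesis .
  qed
  have s2: "- B / (R + 1) * ((C0 * T) * F2 / (D * P)) = - (C1 * B * (M * F2) / (D * (R + 1) * P))"
    unfolding ct using Fnz Rnz R1nz Dnz Pnz by (simp add: field_simps)
  have calc: "F * (- R * B / ((R + 1) * R * F)) * (C0 * F2 / (D * P) * T) =
     - (C1 * B * (M * F2) / (D * (R + 1) * P))"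
    unfolding s0 s1 by (rule s2)
  have r1: "(of_nat (r + 1) :: 'k) = R + 1" by (simp add: R_def)
  show ?thesis
    unfolding hc fr1 f21 r1 F_def[symmetric] R_def[symmetric] B_def[symmetric] C1_def[symmetric]
      D_def[symmetric] P_def[symmetric] T_def[symmetric]
    by (rule calc)
qed

theorem mainTheorem9:
  fixes G :: "int^'n::finite^'n" and a :: "'n \<Rightarrow> 'k::field_char_0" and r t :: nat
  assumes "even_unimodular_lattice G"
    and "latform G a a = 1"
    and "odd r" and "odd t" and "t \<ge> 1" and "r \<ge> 3"
  shows "scal (fact (r - 1)) (sqmode G a (- int r) ((sqmode G a (-1) ^^ t) vac)) =
     fin_sum (\<lambda>n::nat. fin_sum (\<lambda>k::nat.
        scal (of_nat (t choose (2*k)) * fact n * stirlS r n * fact (2*k) / (fact k * (-24) ^ k))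
          (hmode G a (- int n - 1) ((hmode G a (-1) ^^ (t - 2*k)) vac))))
   - fin_sum (\<lambda>k::nat.
        scal (of_nat (t choose (2*k+1)) * bernoulli_num (r + 1) * fact (2*k+1)
                / (fact k * of_nat (r + 1) * (-24) ^ k))
          ((hmode G a (-1) ^^ (t - 2*k - 1)) vac))"
proof -
  note lat = assms(2)
  have r1: "r \<ge> 1" using assms(6) by simp
  define Y where "Y = YY G a t"
  define P where "P = (\<Sum>n<r. \<Sum>k\<le>t. scal (of_nat (t choose (2*k)) * fact n * stirlS r n * fact (2*k) / (fact k * (-24) ^ k))
          (hmode G a (- int n - 1) (XX G a (t - 2*k))))"
  define Q where "Q = (\<Sum>k\<le>t. scal (of_nat (t choose (2*k+1)) * bernoulli_num (r + 1) * fact (2*k+1)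
                / (fact k * of_nat (r + 1) * (-24) ^ k)) (XX G a (t - 2*k - 1)))"
  have rhs1: "fin_sum (\<lambda>n::nat. fin_sum (\<lambda>k::nat.
        scal (of_nat (t choose (2*k)) * fact n * stirlS r n * fact (2*k) / (fact k * (-24) ^ k))
          (hmode G a (- int n - 1) ((hmode G a (-1) ^^ (t - 2*k)) vac)))) = P"
  proof -
    have inner: "fin_sum (\<lambda>k::nat.
        scal (of_nat (t choose (2*k)) * fact n * stirlS r n * fact (2*k) / (fact k * (-24) ^ k))
          (hmode G a (- int n - 1) ((hmode G a (-1) ^^ (t - 2*k)) vac))) =
        (\<Sum>k\<le>t. scal (of_nat (t choose (2*k)) * fact n * stirlS r n * fact (2*k) / (fact k * (-24) ^ k))
          (hmode G a (- int n - 1) (XX G a (t - 2*k))))" for n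
      unfolding XX_def by (rule fin_sum_eq) (auto simp: binomial_eq_0)
    show ?thesis unfolding inner P_def
    proof (rule fin_sum_eq)
      fix n assume "n \<notin> {..<r}"
      then have "stirlS r n = (0::'k)" using stirl_zero[OF r1, of n] by simp
      then show "(\<Sum>k\<le>t. scal (of_nat (t choose (2*k)) * fact n * stirlS r n * fact (2*k) / (fact k * (-24) ^ k))
          (hmode G a (- int n - 1) (XX G a (t - 2*k)))) = 0" by simp
    qed simp
  qed
  have rhs2: "fin_sum (\<lambda>k::nat.
        scal (of_nat (t choose (2*k+1)) * bernoulli_num (r + 1) * fact (2*k+1)
                / (fact k * of_nat (r + 1) * (-24) ^ k))
          ((hmode G a (-1) ^^ (t - 2*k - 1)) vac)) = Q"
    unfolding XX_def[symmetric] Q_def by (rule fin_sum_eq) (auto simp: binomial_eq_0)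
  have sq: "sqmode G a (- int r) Y = (\<Sum>m\<in>{- int r..1}. scal (cf (- int r) m) (hmode G a m Y))"
    unfolding Y_def by (rule sq_good) (rule YY_ge2)
  also have "\<dots> = scal (cf (- int r) 1) (hmode G a 1 Y) +
      (\<Sum>n<r. scal (cf (- int r) (- int n - 1)) (hmode G a (- int n - 1) Y))"
  proof -
    have inj: "inj_on (\<lambda>n. - int n - 1) {..<r}" by (auto simp: inj_on_def)
    have n1: "(1::int) \<notin> insert 0 ((\<lambda>n. - int n - 1) ` {..<r})" by auto
    have n0: "(0::int) \<notin> (\<lambda>n. - int n - 1) ` {..<r}" by auto
    show ?thesis unfolding set_r
      by (simp add: sum.insert[OF _ n1] sum.insert[OF _ n0] sum.reindex[OF inj] Y_def YY_0mode)
  qed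
  finally have eqsq: "sqmode G a (- int r) Y = scal (cf (- int r) 1) (hmode G a 1 Y) +
      (\<Sum>n<r. scal (cf (- int r) (- int n - 1)) (hmode G a (- int n - 1) Y))" .
  have L: "scal (fact (r - 1)) (sqmode G a (- int r) Y) =
      scal (fact (r - 1) * cf (- int r) 1) (hmode G a 1 Y) +
      (\<Sum>n<r. scal (fact n * stirlS r n) (hmode G a (- int n - 1) Y))"
  proof -
    have se: "fact (r - Suc 0) * cf (- int r) (- int n - 1) = (fact n * stirlS r n :: 'k)" for n
      using stirl_eq[OF r1, of n, where 'k='k] by simp
    show "scal (fact (r - 1)) (sqmode G a (- int r) Y) =
      scal (fact (r - 1) * cf (- int r) 1) (hmode G a 1 Y) +
      (\<Sum>n<r. scal (fact n * stirlS r n) (hmode G a (- int n - 1) Y))"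
      using eqsq by (simp add: scal_add scal_sum se)
  qed
  have A: "(\<Sum>n<r. scal (fact n * stirlS r n) (hmode G a (- int n - 1) Y)) = P"
    unfolding P_def Y_def YY_def hmode_sum hmode_scal scal_sum scal_scal coefA ..
  have B: "scal (fact (r - 1) * cf (- int r) 1) (hmode G a 1 Y) = - Q"
    unfolding Q_def Y_def YY_1[OF lat] scal_sum scal_scal coef_one[OF r1] coefB[OF r1]
    by (simp add: scal_minus_left sum_negf)
  show ?thesis
    unfolding rhs1 rhs2 YY_pow[OF lat] Y_def[symmetric] L A B by simp
qed

end
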